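(* Let $k\ge d$, let $\widetilde{\mathbf X}\in\mathbb R^{k\times d}$ have rows $(\widetilde{\mathbf x}_1,\dots,\widetilde{\mathbf x}_k)\sim\mathrm{VS}_{D_{\mathcal X}}^k$ and let $\mathbf X\in\mathbb R^{k\times d}$ have rows $(\mathbf x_1,\dots,\mathbf x_k)\sim D_{\mathcal X}^k$. Then for every positive definite $\boldsymbol\Sigma\in\mathbb R^{d\times d}$, the conditional distribution of $\widetilde{\mathbf X}$ given $\widetilde{\mathbf X}^\top\widetilde{\mathbf X}=\boldsymbol\Sigma$ is the same as the conditional distribution of $\mathbf X$ given $\mathbf X^\top\mathbf X=\boldsymbol\Sigma$; here conditioning on $\mathbf M=\boldsymbol\Sigma$ is understood as the limit $\epsilon\to0$ of conditioning on $\{\|\mathbf M-\boldsymbol\Sigma\|\le\epsilon\}$ ($\|\cdot\|$ the spectral norm), i.e. for every measurable $A$ for which these conditioning events have positive probability and $\lim_{\epsilon\to0}\Pr(\mathbf X\in A\mid\|\mathbf X^\top\mathbf X-\boldsymbol\Sigma\|\le\epsilon)$ exists, the limit $\lim_{\epsilon\to0}\Pr(\widetilde{\mathbf X}\in A\mid\|\widetilde{\mathbf X}^\top\widetilde{\mathbf X}-\boldsymbol\Sigma\|\le\epsilon)$ exists and equals it.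
   Context: $D_{\mathcal X}$ is a probability distribution on $\mathbb R^d$ with $\mathbb E\|\mathbf x\|^2<\infty$ and invertible $\boldsymbol\Sigma_{D_{\mathcal X}}:=\mathbb E[\mathbf x\mathbf x^\top]$; $D_{\mathcal X}^k$ is the law of $k$ i.i.d. draws. $\mathrm{VS}_{D_{\mathcal X}}^k(A)=\mathbb E_{D_{\mathcal X}^k}[\mathbf 1_A\det(\sum_{i=1}^k\mathbf x_i\mathbf x_i^\top)]/\big(d!\binom kd\det(\boldsymbol\Sigma_{D_{\mathcal X}})\big)$ for measurable $A\subseteq(\mathbb R^d)^k$. *)

theory Defs
  imports "HOL-Probability.Probability"
begin

text \<open>A sample of k points of R^d is a function xs :: 'k => real^'d (rows of X are xs i).
  D^k is the product measure of k copies of D.\<close>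

definition iid :: "(real^'d) measure \<Rightarrow> ('k::finite \<Rightarrow> real^'d) measure"
  where "iid D = PiM (UNIV :: 'k set) (\<lambda>_. D)"

definition gram :: "('k::finite \<Rightarrow> real^'d::finite) \<Rightarrow> real^'d^'d"
  where "gram xs = (\<chi> i j. \<Sum>l\<in>UNIV. xs l $ i * xs l $ j)"

definition second_moment :: "(real^'d::finite) measure \<Rightarrow> real^'d^'d"
  where "second_moment D = (\<chi> i j. \<integral>x. x $ i * x $ j \<partial>D)"

definition VS :: "(real^'d::finite) measure \<Rightarrow> ('k::finite \<Rightarrow> real^'d) measure"
  where "VS D = density (iid D)
     (\<lambda>xs. ennreal (det (gram xs) /
        (fact CARD('d) * real (CARD('k) choose CARD('d)) * det (second_moment D))))"

definition spec_norm :: "real^'d::finite^'d \<Rightarrow> real"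
  where "spec_norm M = onorm (\<lambda>v. M *v v)"

definition pos_def :: "real^'d::finite^'d \<Rightarrow> bool"
  where "pos_def S \<longleftrightarrow> transpose S = S \<and> (\<forall>v. v \<noteq> 0 \<longrightarrow> v \<bullet> (S *v v) > 0)"

definition near_event :: "('k::finite \<Rightarrow> real^'d::finite) measure \<Rightarrow> real^'d^'d \<Rightarrow> real
    \<Rightarrow> ('k \<Rightarrow> real^'d) set"
  where "near_event M S e = {xs \<in> space M. spec_norm (gram xs - S) \<le> e}"

definition cond_prob :: "'a measure \<Rightarrow> 'a set \<Rightarrow> 'a set \<Rightarrow> real"
  where "cond_prob M A B = measure M (A \<inter> B) / measure M B"

end

theory Submission imports Defs begin
lemma ratio_bound:
  fixes a b p d v1 v2 :: real
  assumes "0 \<le> a" "a \<le> b" "0 < b" "0 < p" "0 < d" "d \<le> 1/2"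
    and "(1-d)*p*a \<le> v1" "v1 \<le> (1+d)*p*a" "(1-d)*p*b \<le> v2" "v2 \<le> (1+d)*p*b"
  shows "\<bar>v1/v2 - a/b\<bar> \<le> 4*d"
proof -
  have pb: "0 < (1-d)*p*b" using assms by simp
  have v2: "v2 > 0" using assms pb by linarith
  have pa: "0 \<le> (1-d)*p*a" using assms by simp
  have v1: "0 \<le> v1" using pa assms by linarith
  have r0: "0 \<le> a/b" "a/b \<le> 1" using assms by auto
  have up: "v1/v2 \<le> ((1+d)*p*a)/((1-d)*p*b)"
    by (rule frac_le) (use assms v2 pb v1 in auto)
  have lo: "((1-d)*p*a)/((1+d)*p*b) \<le> v1/v2"
    by (rule frac_le) (use assms v2 pa v1 in auto)
  have e1: "((1+d)*p*a)/((1-d)*p*b) = (a/b) * ((1+d)/(1-d))" using assms by (simp add: field_simps)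
  have e2: "((1-d)*p*a)/((1+d)*p*b) = (a/b) * ((1-d)/(1+d))"
  proof -
    have n1: "b + b*d \<noteq> 0" "b*p + b*(d*p) \<noteq> 0" "1 + d \<noteq> 0" using assms by (simp_all add: add_pos_pos mult_pos_pos order.strict_implies_not_eq[symmetric])
    show ?thesis using assms n1 by (simp add: field_simps)
  qed
  have dd: "d*d \<le> d*(1/2)" using assms by (intro mult_left_mono) auto
  have f1: "(1+d)/(1-d) \<le> 1 + 4*d"
  proof -
    have "1+d \<le> (1+4*d)*(1-d)" using dd by (simp add: algebra_simps)
    then show ?thesis using assms by (simp add: pos_divide_le_eq)
  qed
  have f2: "1 - 4*d \<le> (1-d)/(1+d)"
  proof -
    have "(1-4*d)*(1+d) \<le> 1-d" using dd assms by (simp add: algebra_simps)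
    then show ?thesis using assms by (simp add: pos_le_divide_eq)
  qed
  have g1: "(a/b) * ((1+d)/(1-d)) \<le> (a/b) * (1 + 4*d)" using f1 r0(1) by (rule mult_left_mono)
  have g2: "(a/b) * (1 - 4*d) \<le> (a/b) * ((1-d)/(1+d))" using f2 r0(1) by (rule mult_left_mono)
  have h: "(a/b)*(4*d) \<le> 4*d" using r0 assms by (intro mult_left_le_one_le) auto
  have q1: "(a/b) * (1 + 4*d) = a/b + (a/b)*(4*d)" by (simp add: algebra_simps)
  have q2: "(a/b) * (1 - 4*d) = a/b - (a/b)*(4*d)" by (simp add: algebra_simps)
  have s1: "v1/v2 \<le> a/b + 4*d" using up e1 g1 q1 h by linarith
  have s2: "a/b - 4*d \<le> v1/v2" using lo e2 g2 q2 h by linarith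
  show ?thesis using s1 s2 by (simp add: abs_le_iff)
qed

lemma det_cont: "isCont (det :: real^'n::finite^'n \<Rightarrow> real) S"
proof -
  have e: "isCont (\<lambda>A::real^'n^'n. A$i$j) S" for i j
    by (rule linear_continuous_at[OF bounded_linear_compose[OF bounded_linear_vec_nth bounded_linear_vec_nth]])
  show ?thesis unfolding det_def[abs_def]
    by (rule continuous_sum, rule continuous_mult, rule continuous_const, rule continuous_prod, rule e)
qed
lemma entry_le: fixes M :: "real^'d::finite^'d"
  shows "\<bar>M$i$j\<bar> \<le> spec_norm M"
proof -
  have "M$i$j = (M *v axis j 1) $ i" by (simp add: matrix_vector_mult_basis column_def)
  also have "\<bar>\<dots>\<bar> \<le> norm (M *v axis j 1)" by (rule component_le_norm_cart)
  also have "\<dots> \<le> spec_norm M * norm (axis j (1::real))" unfolding spec_norm_def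
    by (rule onorm) simp
  finally show ?thesis by simp
qed
lemma norm_le_entries: fixes M :: "real^'d::finite^'d"
  shows "norm M \<le> (\<Sum>i\<in>UNIV. \<Sum>j\<in>UNIV. \<bar>M$i$j\<bar>)"
proof -
  have "norm M \<le> (\<Sum>i\<in>UNIV. norm (M$i))" unfolding norm_vec_def by (rule L2_set_le_sum) simp
  also have "\<dots> \<le> (\<Sum>i\<in>UNIV. \<Sum>j\<in>UNIV. \<bar>M$i$j\<bar>)" by (intro sum_mono norm_le_l1_cart)
  finally show ?thesis .
qed
lemma norm_le_spec: fixes M :: "real^'d::finite^'d"
  shows "norm M \<le> real (CARD('d) * CARD('d)) * spec_norm M"
proof -
  have "norm M \<le> (\<Sum>i\<in>(UNIV::'d set). \<Sum>j\<in>(UNIV::'d set). spec_norm M)"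
    by (rule order_trans[OF norm_le_entries]) (intro sum_mono; simp only: entry_le)
  then show ?thesis by simp
qed
lemma posdef_det: fixes S :: "real^'d::finite^'d" assumes "pos_def S" shows "det S \<noteq> 0"
proof -
  have "inj ((*v) S)"
  proof (rule linear_injective_0[THEN iffD2])
    show "linear ((*v) S)" by simp
    show "\<forall>x. S *v x = 0 \<longrightarrow> x = 0" using assms unfolding pos_def_def
      by (metis inner_zero_right less_irrefl)
  qed
  then show ?thesis using det_nz_iff_inj[of "(*v) S"] by simp
qed

lemma gram_meas:
  assumes "sets D = sets borel"
  shows "(\<lambda>xs. det (gram xs)) \<in> borel_measurable (iid D :: ('k::finite \<Rightarrow> real^'d::finite) measure)"
proof -
  have c: "(\<lambda>xs. xs l $ i) \<in> borel_measurable (iid D :: ('k \<Rightarrow> real^'d) measure)" for l i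
  proof -
    have "(\<lambda>x::real^'d. x $ i) \<in> borel_measurable D"
      using measurable_cong_sets[OF assms refl] borel_measurable_continuous_onI[OF linear_continuous_on[OF bounded_linear_vec_nth]]
      by blast
    then show ?thesis unfolding iid_def
      by (rule measurable_compose[OF measurable_component_singleton, rotated]) simp
  qed
  show ?thesis unfolding det_def gram_def
    by (simp add: c borel_measurable_sum borel_measurable_prod borel_measurable_times)
qed

lemma det_close:
  fixes S :: "real^'d::finite^'d"
  assumes dS0: "det S \<noteq> 0" and d0: "d > 0"
  shows "\<exists>\<eta>>0. \<forall>M. spec_norm (M - S) < \<eta> \<longrightarrow> \<bar>det M - det S\<bar> < d * \<bar>det S\<bar>"
proof -
  define K where "K = real (CARD('d) * CARD('d))"
  have K0: "K > 0" unfolding K_def by simp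
  have "d * \<bar>det S\<bar> > 0" using d0 dS0 by simp
  then obtain \<eta> where \<eta>: "\<eta> > 0" "\<And>M. dist M S < \<eta> \<Longrightarrow> dist (det M) (det S) < d * \<bar>det S\<bar>"
    using det_cont[of S] unfolding continuous_at_eps_delta by blast
  show ?thesis
  proof (intro exI[of _ "\<eta>/K"] conjI allI impI)
    show "\<eta>/K > 0" using \<eta> K0 by simp
    fix M :: "real^'d^'d" assume sn: "spec_norm (M - S) < \<eta>/K"
    have "norm (M - S) \<le> K * spec_norm (M - S)" unfolding K_def by (rule norm_le_spec)
    also have "\<dots> < \<eta>" using sn K0 by (simp add: pos_less_divide_eq mult.commute)
    finally have "dist M S < \<eta>" by (simp add: dist_norm)
    then show "\<bar>det M - det S\<bar> < d * \<bar>det S\<bar>" using \<eta>(2) unfolding dist_real_def by blast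
  qed
qed

lemma ratio_close:
  fixes S :: "real^'d::finite^'d"
  assumes dS0: "det S \<noteq> 0" and d0: "0 < d" "d < 1"
  shows "\<exists>\<eta>>0. \<forall>M. spec_norm (M - S) < \<eta> \<longrightarrow> 1 - d < det M / det S \<and> det M / det S < 1 + d"
proof -
  obtain \<eta> where \<eta>: "\<eta> > 0" "\<And>M. spec_norm (M - S) < \<eta> \<Longrightarrow> \<bar>det M - det S\<bar> < d * \<bar>det S\<bar>"
    using det_close[OF dS0 d0(1)] by blast
  show ?thesis
  proof (intro exI[of _ \<eta>] conjI allI impI \<eta>(1))
    fix M :: "real^'d^'d" assume M: "spec_norm (M - S) < \<eta>"
    have "\<bar>det M / det S - 1\<bar> = \<bar>det M - det S\<bar> / \<bar>det S\<bar>"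
    proof -
      have "det M / det S - 1 = (det M - det S) / det S" using dS0 by (simp add: diff_divide_distrib)
      then show ?thesis by (simp add: abs_divide)
    qed
    also have "\<dots> < d" using \<eta>(2)[OF M] dS0 by (simp add: pos_divide_less_eq)
    finally have "\<bar>det M / det S - 1\<bar> < d" .
    then show "1 - d < det M / det S" "det M / det S < 1 + d" by linarith+
  qed
qed

lemma VS_emeasure:
  assumes "sets D = sets borel" "X \<in> sets (iid D :: ('k::finite \<Rightarrow> real^'d::finite) measure)"
  shows "emeasure (VS D :: ('k \<Rightarrow> real^'d) measure) X =
    (\<integral>\<^sup>+x. ennreal (det (gram x) / (fact CARD('d) * real (CARD('k) choose CARD('d)) * det (second_moment D))) * indicator X x \<partial>(iid D))"
proof -
  have gm: "(\<lambda>xs. ennreal (det (gram xs) / (fact CARD('d) * real (CARD('k) choose CARD('d)) * det (second_moment D))))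
      \<in> borel_measurable (iid D :: ('k \<Rightarrow> real^'d) measure)"
  proof -
    have "(\<lambda>xs. det (gram xs) / (fact CARD('d) * real (CARD('k) choose CARD('d)) * det (second_moment D)))
      \<in> borel_measurable (iid D :: ('k \<Rightarrow> real^'d) measure)"
      by (rule borel_measurable_divide[OF gram_meas[OF assms(1)] measurable_const]) simp
    then show ?thesis by (rule measurable_compose[OF _ measurable_ennreal])
  qed
  show ?thesis unfolding VS_def using gm assms(2) by (rule emeasure_density)
qed

lemma sets_VS: "sets (VS D) = sets (iid D)" and space_VS: "space (VS D) = space (iid D)"
  unfolding VS_def by auto

lemma sign_transfer:
  fixes x f m :: real and c1 c2 :: nat
  assumes h: "x / (f * real c1 * m) > 0" and f: "f > 0" and c2: "c2 > 0"
  shows "x / (f * real c2 * m) > 0"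
proof -
  have c1: "c1 \<noteq> 0" using h by (cases "c1 = 0") auto
  have fc1: "f * real c1 > 0" using f c1 by simp
  have m: "m \<noteq> 0" using h by (cases "m = 0") auto
  have e1: "x / (f * real c1 * m) = (x / m) / (f * real c1)" by (simp add: divide_divide_eq_left ac_simps)
  have hh: "(x / m) / (f * real c1) > 0" using h unfolding e1 .
  have xm: "x / m > 0" using hh fc1 unfolding zero_less_divide_iff by linarith
  have fc2: "f * real c2 > 0" using f c2 by simp
  have "x / (f * real c2 * m) = (x / m) / (f * real c2)" by (simp add: divide_divide_eq_left ac_simps)
  then show ?thesis using xm fc2 by (simp only: divide_pos_pos)
qed

lemma sign_lemma:
  fixes D :: "(real^'d::finite) measure" and S :: "real^'d^'d"
  assumes sD: "sets D = sets borel" and dS0: "det S \<noteq> 0"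
    and pos: "\<forall>e>0. measure (VS D :: ('k::finite \<Rightarrow> real^'d) measure) (near_event (VS D :: ('k \<Rightarrow> real^'d) measure) S e) > 0"
  shows "det S / (fact CARD('d) * real (CARD('k) choose CARD('d)) * det (second_moment D)) > 0"
proof (rule ccontr)
  define C where "C = fact CARD('d) * real (CARD('k) choose CARD('d)) * det (second_moment D)"
  let ?P = "iid D :: ('k \<Rightarrow> real^'d) measure"
  let ?V = "VS D :: ('k \<Rightarrow> real^'d) measure"
  assume np: "\<not> det S / C > 0"
  obtain \<eta> where \<eta>: "\<eta> > 0" "\<And>M. spec_norm (M - S) < \<eta> \<Longrightarrow> 1 - 1/2 < det M / det S \<and> det M / det S < 1 + 1/2"
    using ratio_close[OF dS0, of "1/2"] by auto
  define e where "e = \<eta>/2"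
  have e0: "e > 0" "e < \<eta>" using \<eta>(1) unfolding e_def by auto
  define B where "B = near_event ?V S e"
  have Bp: "measure ?V B > 0" using pos e0 unfolding B_def by blast
  have BV: "B \<in> sets ?V"
  proof (rule ccontr)
    assume "B \<notin> sets ?V"
    then have "measure ?V B = 0" by (rule measure_notin_sets)
    then show False using Bp by simp
  qed
  then have BP: "B \<in> sets ?P" by (simp add: sets_VS)
  have g0: "det (gram xs) / C \<le> 0" if "xs \<in> B" for xs
  proof -
    have "spec_norm (gram xs - S) \<le> e" using that unfolding B_def near_event_def by simp
    then have "spec_norm (gram xs - S) < \<eta>" using e0 by linarith
    then have "1 - 1/2 < det (gram xs) / det S" using \<eta>(2) by blast
    then have q: "det (gram xs) / det S > 0" by linarith
    have "det (gram xs) / C = (det (gram xs) / det S) * (det S / C)" using dS0 by simp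
    also have "\<dots> \<le> 0" by (rule mult_nonneg_nonpos) (use q np in auto)
    finally show ?thesis .
  qed
  have "emeasure ?V B = 0"
    unfolding VS_emeasure[OF sD BP] C_def[symmetric]
    using g0 by (intro nn_integral_zero') (auto simp: indicator_def ennreal_eq_0_iff)
  then have "measure ?V B = 0" by (simp add: measure_def)
  then show False using Bp by simp
qed

theorem lemma3:
  fixes D :: "(real^'d::finite) measure"
    and S :: "real^'d^'d"
    and A :: "('k::finite \<Rightarrow> real^'d) set"
    and L :: real
  assumes "prob_space D"
    and "sets D = sets borel"
    and "integrable D (\<lambda>x. (norm x)\<^sup>2)"
    and "invertible (second_moment D)"
    and "CARD('k) \<ge> CARD('d)"
    and "pos_def S"
    and "A \<in> sets (iid D :: ('k \<Rightarrow> real^'d) measure)"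
    and "\<forall>e>0. measure (iid D) (near_event (iid D) S e) > 0"
    and "\<forall>e>0. measure (VS D) (near_event (VS D) S e) > 0"
    and "((\<lambda>e. cond_prob (iid D) A (near_event (iid D) S e)) \<longlongrightarrow> L) (at_right 0)"
  shows "((\<lambda>e. cond_prob (VS D) A (near_event (VS D) S e)) \<longlongrightarrow> L) (at_right 0)"
proof -
  let ?P = "iid D :: ('k \<Rightarrow> real^'d) measure"
  let ?V = "VS D :: ('k \<Rightarrow> real^'d) measure"
  define m where "m = det (second_moment D)"
  define f where "f = (fact CARD('d) :: real)"
  define C where "C = f * real (CARD('k) choose CARD('d)) * m"
  define g where "g = (\<lambda>xs::'k \<Rightarrow> real^'d. det (gram xs) / C)"
  define dS where "dS = det S"
  define B where "B = near_event ?P S"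
  define p where "p = dS / C"
  have PS: "prob_space ?P" unfolding iid_def by (rule prob_space_PiM) (use assms(1) in auto)
  then interpret P: prob_space ?P .
  have spV: "space ?V = space ?P" and setsV: "sets ?V = sets ?P" by (rule space_VS, rule sets_VS)
  have BV: "near_event ?V S = B" unfolding B_def near_event_def using spV by simp
  have dS0: "dS \<noteq> 0" unfolding dS_def by (rule posdef_det[OF assms(6)])
  have emV: "emeasure ?V X = (\<integral>\<^sup>+x. ennreal (g x) * indicator X x \<partial>?P)" if "X \<in> sets ?P" for X
    unfolding g_def C_def f_def m_def by (rule VS_emeasure[OF assms(2) that])
  have p0: "p > 0"
  proof -
    note sl = sign_lemma[OF assms(2) dS0[unfolded dS_def] assms(9)]
    have fp: "f > 0" unfolding f_def by simp
    have cp: "(CARD('k) choose CARD('d)) > 0" using assms(5) by simp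
    show ?thesis unfolding p_def C_def dS_def
      by (rule sign_transfer[OF sl[folded f_def m_def] fp cp])
  qed
  show ?thesis
    unfolding tendsto_iff
  proof (intro allI impI)
    fix \<epsilon> :: real assume \<epsilon>: "\<epsilon> > 0"
    define d where "d = min (1/2) (\<epsilon>/8)"
    have d0: "d > 0" "d \<le> 1/2" "4*d < \<epsilon>" using \<epsilon> unfolding d_def by auto
    obtain \<eta> where \<eta>: "\<eta> > 0" "\<And>M. spec_norm (M - S) < \<eta> \<Longrightarrow> 1 - d < det M / dS \<and> det M / dS < 1 + d"
      using ratio_close[OF dS0[unfolded dS_def], of d] d0 unfolding dS_def by auto
    have ev1: "eventually (\<lambda>e. 0 < e \<and> e < \<eta>) (at_right (0::real))"
      using \<eta>(1) by (intro eventually_at_rightI[of 0 \<eta>]) auto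
    have ev2: "eventually (\<lambda>e. dist (cond_prob ?P A (B e)) L < \<epsilon> - 4*d) (at_right (0::real))"
      using assms(10) d0 unfolding tendsto_iff B_def by auto
    show "eventually (\<lambda>e. dist (cond_prob ?V A (near_event ?V S e)) L < \<epsilon>) (at_right 0)"
      using ev1 ev2
    proof eventually_elim
      case (elim e)
      then have e: "0 < e" "e < \<eta>" by auto
      have qb: "1 - d < det (gram xs) / dS \<and> det (gram xs) / dS < 1 + d" if "xs \<in> B e" for xs
      proof -
        have "spec_norm (gram xs - S) \<le> e" using that unfolding B_def near_event_def by simp
        then show ?thesis using \<eta>(2)[of "gram xs"] e by auto
      qed
      have gq: "g xs = (det (gram xs) / dS) * p" for xs unfolding g_def p_def using dS0 by simp
      have bnd: "(1-d)*p*measure ?P X \<le> measure ?V X \<and> measure ?V X \<le> (1+d)*p*measure ?P X"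
        if X: "X \<in> sets ?P" "X \<subseteq> B e" for X
      proof -
        have gb: "(1-d)*p \<le> g x \<and> g x \<le> (1+d)*p" if "x \<in> X" for x
        proof -
          have "1 - d < det (gram x) / dS \<and> det (gram x) / dS < 1 + d" using qb[of x] that X(2) by blast
          then have h1: "1 - d \<le> det (gram x) / dS" and h2: "det (gram x) / dS \<le> 1 + d" by auto
          have "(1-d)*p \<le> (det (gram x) / dS) * p" by (rule mult_right_mono[OF h1]) (use p0 in simp)
          moreover have "(det (gram x) / dS) * p \<le> (1+d)*p" by (rule mult_right_mono[OF h2]) (use p0 in simp)
          ultimately show ?thesis unfolding gq by blast
        qed
        have up: "emeasure ?V X \<le> ennreal ((1+d)*p*measure ?P X)"
        proof -
          have "emeasure ?V X \<le> (\<integral>\<^sup>+x. ennreal ((1+d)*p) * indicator X x \<partial>?P)"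
            unfolding emV[OF X(1)] by (intro nn_integral_mono) (auto simp: indicator_def gb ennreal_leI)
          also have "\<dots> = ennreal ((1+d)*p) * emeasure ?P X" using X(1) by (rule nn_integral_cmult_indicator)
          also have "\<dots> = ennreal ((1+d)*p*measure ?P X)"
            using p0 d0 by (simp add: P.emeasure_eq_measure ennreal_mult)
          finally show ?thesis .
        qed
        have lo: "ennreal ((1-d)*p*measure ?P X) \<le> emeasure ?V X"
        proof -
          have "ennreal ((1-d)*p*measure ?P X) = ennreal ((1-d)*p) * emeasure ?P X"
            using p0 d0 by (simp add: P.emeasure_eq_measure ennreal_mult)
          also have "\<dots> = (\<integral>\<^sup>+x. ennreal ((1-d)*p) * indicator X x \<partial>?P)"
            using X(1) by (rule nn_integral_cmult_indicator[symmetric])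
          also have "\<dots> \<le> emeasure ?V X"
            unfolding emV[OF X(1)] by (intro nn_integral_mono) (auto simp: indicator_def gb ennreal_leI)
          finally show ?thesis .
        qed
        have fin: "emeasure ?V X \<noteq> \<top>" using up by (auto simp: top_unique)
        have eq: "emeasure ?V X = ennreal (measure ?V X)" using fin by (rule emeasure_eq_ennreal_measure)
        have nn: "0 \<le> (1-d)*p*measure ?P X" using p0 d0 by simp
        have nn2: "0 \<le> (1+d)*p*measure ?P X" using p0 d0 by simp
        show ?thesis using up lo nn nn2 unfolding eq
          by (simp add: ennreal_le_iff)
      qed
      have main: "\<bar>cond_prob ?V A (B e) - cond_prob ?P A (B e)\<bar> \<le> 4*d"
      proof (cases "B e \<in> sets ?P \<and> measure ?P (B e) > 0")
        case True
        then have Be: "B e \<in> sets ?P" and Bpos: "measure ?P (B e) > 0" by auto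
        have AB: "A \<inter> B e \<in> sets ?P" using assms(7) Be by blast
        have b1: "(1-d)*p*measure ?P (A \<inter> B e) \<le> measure ?V (A \<inter> B e)"
                 "measure ?V (A \<inter> B e) \<le> (1+d)*p*measure ?P (A \<inter> B e)"
          using bnd[OF AB] by auto
        have b2: "(1-d)*p*measure ?P (B e) \<le> measure ?V (B e)"
                 "measure ?V (B e) \<le> (1+d)*p*measure ?P (B e)"
          using bnd[OF Be] by auto
        have mono: "measure ?P (A \<inter> B e) \<le> measure ?P (B e)"
          using Be by (intro P.finite_measure_mono) auto
        have "\<bar>measure ?V (A \<inter> B e) / measure ?V (B e) - measure ?P (A \<inter> B e) / measure ?P (B e)\<bar> \<le> 4*d"
          by (rule ratio_bound[OF measure_nonneg mono Bpos p0 d0(1) d0(2) b1 b2])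
        then show ?thesis unfolding cond_prob_def .
      next
        case False
        have zP: "measure ?P (B e) = 0"
          using False measure_notin_sets[of "B e" ?P] measure_nonneg[of ?P "B e"] by force
        have zV: "measure ?V (B e) = 0"
        proof (cases "B e \<in> sets ?P")
          case True
          then show ?thesis using bnd[OF True] zP measure_nonneg[of ?V "B e"] by auto
        next
          case False
          then show ?thesis using setsV by (simp add: measure_notin_sets)
        qed
        show ?thesis unfolding cond_prob_def zP zV using d0 by simp
      qed
      then show ?case using elim unfolding BV dist_real_def by linarith
    qed
  qed
qed
end
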